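(* Assume the standing setup in the context, and assume one of the sample times equals $0$, so that $x^*(0)$ is a column of $\Lambda_0$. Then the optimal solution set of (P1) and the feasible set of (P2) coincide under the following correspondences. (i) If $(\hat A,\hat B,\hat Q,\hat R,\hat P)$ is an optimal solution of (P1), set $Z=\hat A^\top\hat P$ and $M=\hat A-\hat BK^*$. Then $(Z,\hat Q,\hat R,\hat P,M)$ is feasible for (P2). (ii) Conversely, let $(Z,\hat Q,\hat R,\hat P,M)$ be feasible for (P2), and set $\hat A=\hat P^{-1}Z^\top$ and $\hat B=\hat P^{-1}K^{*\top}\hat R$. Then $(\hat A,\hat B,\hat Q,\hat R,\hat P)$ is an optimal solution of (P1), with objective value $0$ and $\hat R^{-1}\hat B^\top\hat P=K^*$.
   Context: Standing setup. The true system is given by $A\in\mathbb{R}^{n\times n}$ and $B\in\mathbb{R}^{n\times m}$, with $(A,B)$ stabilizable. The true weights are $Q$, symmetric positive semidefinite, and $R$, symmetric positive definite, with $(A,Q^{1/2})$ detectable. $P$ is the unique symmetric positive definite (stabilizing) solution of $A^\top P+PA-PBR^{-1}B^\top P+Q=0$. Set $K^*=R^{-1}B^\top P$ and $A_K^*=A-BK^*$. The expert trajectory is $x^*(t)=e^{A_K^*t}x^*(0)$ for $t\in[0,T]$, with $T>0$. Fix $\epsilon>0$. Problem (P1): minimize, over $\hat A\in\mathbb{R}^{n\times n}$, $\hat B\in\mathbb{R}^{n\times m}$ and symmetric $\hat Q,\hat R,\hat P$ (of sizes $n,m,n$), the objective $J=\|\hat K-K^*\|_2^2+\int_0^T\|\hat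 x(t)-x^*(t)\|_2^2\,dt$, subject to the following constraints: - $\hat A^\top\hat P+\hat P\hat A-\hat P\hat B\hat R^{-1}\hat B^\top\hat P+\hat Q=0$; - $\hat K=\hat R^{-1}\hat B^\top\hat P$; - $\hat x(t)=e^{(\hat A-\hat B\hat K)t}x^*(0)$; - $\hat Q\succeq0$, $\hat R\succeq\epsilon I$, $\hat P\succeq\epsilon I$. Data matrices: fix sample times $t_1,\dots,t_N\in[0,T]$. Let $x^{*(i)}$ denote the $i$-th derivative of $x^*$, and set $\Lambda_i=[x^{*(i)}(t_1)\cdots x^{*(i)}(t_N)]$ for $i=0,\dots,n$. Define $\bar\Lambda_1=[\Lambda_0\cdots\Lambda_{n-1}]$ and $\bar\Lambda_2=[\Lambda_1\cdots\Lambda_n]$. Problem (P2), a feasibility problem: find $Z\in\mathbb{R}^{n\times n}$, $M\in\mathbb{R}^{n\times n}$ and symmetric $\hat Q,\hat R,\hat P$ such that - $Z^\top+Z-K^{*\top}\hat RK^*+\hat Q=0$; - $Z^\top-K^{*\top}\hat RK^*=\hat PM$; - $M\bar\Lambda_1=\bar\Lambda_2$; - $\hat Q\succeq0$, $\hat R\succeq\epsilon I$, $\hat P\succeq\epsilon I$. *)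

theory Defs
  imports "HOL-Analysis.Analysis"
begin

primrec mpow :: "real^'n^'n \<Rightarrow> nat \<Rightarrow> real^'n^'n" where
  "mpow A 0 = mat 1"
| "mpow A (Suc k) = A ** mpow A k"

definition mexp :: "real^'n^'n \<Rightarrow> real^'n^'n" where
  "mexp A = (\<Sum>k. (1 / fact k) *\<^sub>R mpow A k)"

definition sym_mat :: "real^'n^'n \<Rightarrow> bool" where
  "sym_mat S \<longleftrightarrow> transpose S = S"

(* S \<succeq> c I  (for symmetric S) *)
definition psd_ge :: "real^'n^'n \<Rightarrow> real \<Rightarrow> bool" where
  "psd_ge S c \<longleftrightarrow> (\<forall>x. x \<bullet> (S *v x) \<ge> c * (x \<bullet> x))"

definition pd_mat :: "real^'n^'n \<Rightarrow> bool" where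
  "pd_mat S \<longleftrightarrow> (\<forall>x. x \<noteq> 0 \<longrightarrow> x \<bullet> (S *v x) > 0)"

definition cmat :: "real^'n^'m \<Rightarrow> complex^'n^'m" where
  "cmat A = (\<chi> i j. complex_of_real (A $ i $ j))"

definition hurwitz :: "real^'n^'n \<Rightarrow> bool" where
  "hurwitz A \<longleftrightarrow> (\<forall>s::complex. det (mat s - cmat A) = 0 \<longrightarrow> Re s < 0)"

definition stabilizable :: "real^'n^'n \<Rightarrow> real^'m^'n \<Rightarrow> bool" where
  "stabilizable A B \<longleftrightarrow> (\<exists>K::real^'n^'m. hurwitz (A - B ** K))"

definition detectable :: "real^'n^'n \<Rightarrow> real^'n^'p \<Rightarrow> bool" where
  "detectable A C \<longleftrightarrow> (\<exists>L::real^'p^'n. hurwitz (A - L ** C))"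

definition riccati :: "real^'n^'n \<Rightarrow> real^'m^'n \<Rightarrow> real^'n^'n \<Rightarrow> real^'m^'m \<Rightarrow> real^'n^'n \<Rightarrow> real^'n^'n" where
  "riccati A B Q R P = transpose A ** P + P ** A - P ** B ** matrix_inv R ** transpose B ** P + Q"

definition gain :: "real^'m^'n \<Rightarrow> real^'m^'m \<Rightarrow> real^'n^'n \<Rightarrow> real^'n^'m" where
  "gain B R P = matrix_inv R ** transpose B ** P"

definition traj :: "real^'n^'n \<Rightarrow> real^'m^'n \<Rightarrow> real^'n^'m \<Rightarrow> real^'n \<Rightarrow> real \<Rightarrow> real^'n" where
  "traj A B K x0 t = mexp (t *\<^sub>R (A - B ** K)) *v x0"

primrec nderiv :: "nat \<Rightarrow> (real \<Rightarrow> real^'n) \<Rightarrow> real \<Rightarrow> real^'n" where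
  "nderiv 0 f = f"
| "nderiv (Suc i) f = (\<lambda>t. vector_derivative (nderiv i f) (at t))"

definition mnorm2 :: "real^'n^'m \<Rightarrow> real" where
  "mnorm2 M = onorm (\<lambda>x. M *v x)"

definition J1 :: "real^'n^'m \<Rightarrow> real^'n^'n \<Rightarrow> real^'n \<Rightarrow> real
     \<Rightarrow> real^'n^'n \<Rightarrow> real^'m^'n \<Rightarrow> real^'n^'n \<Rightarrow> real^'m^'m \<Rightarrow> real^'n^'n \<Rightarrow> real" where
  "J1 Ks AKs x0 T Ah Bh Qh Rh Ph =
     (mnorm2 (gain Bh Rh Ph - Ks))\<^sup>2
     + integral {0..T} (\<lambda>t. (norm (traj Ah Bh (gain Bh Rh Ph) x0 t - mexp (t *\<^sub>R AKs) *v x0))\<^sup>2)"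

definition P1_feasible :: "real \<Rightarrow> real^'n^'n \<Rightarrow> real^'m^'n \<Rightarrow> real^'n^'n \<Rightarrow> real^'m^'m \<Rightarrow> real^'n^'n \<Rightarrow> bool" where
  "P1_feasible \<epsilon> Ah Bh Qh Rh Ph \<longleftrightarrow>
     sym_mat Qh \<and> sym_mat Rh \<and> sym_mat Ph \<and>
     riccati Ah Bh Qh Rh Ph = 0 \<and>
     psd_ge Qh 0 \<and> psd_ge Rh \<epsilon> \<and> psd_ge Ph \<epsilon>"

definition P1_optimal :: "real \<Rightarrow> real^'n^'m \<Rightarrow> real^'n^'n \<Rightarrow> real^'n \<Rightarrow> real
     \<Rightarrow> real^'n^'n \<Rightarrow> real^'m^'n \<Rightarrow> real^'n^'n \<Rightarrow> real^'m^'m \<Rightarrow> real^'n^'n \<Rightarrow> bool" where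
  "P1_optimal \<epsilon> Ks AKs x0 T Ah Bh Qh Rh Ph \<longleftrightarrow>
     P1_feasible \<epsilon> Ah Bh Qh Rh Ph \<and>
     (\<forall>A' B' Q' R' P'. P1_feasible \<epsilon> A' B' Q' R' P' \<longrightarrow>
        J1 Ks AKs x0 T Ah Bh Qh Rh Ph \<le> J1 Ks AKs x0 T A' B' Q' R' P')"

(* feasible set of (P2); xs is the expert trajectory, ts the list of sample times.
   M Lambda1bar = Lambda2bar is written column by column. *)
definition P2_feasible :: "real \<Rightarrow> real^'n^'m \<Rightarrow> (real \<Rightarrow> real^'n) \<Rightarrow> real list
     \<Rightarrow> real^'n^'n \<Rightarrow> real^'n^'n \<Rightarrow> real^'m^'m \<Rightarrow> real^'n^'n \<Rightarrow> real^'n^'n \<Rightarrow> bool" where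
  "P2_feasible \<epsilon> Ks xs ts Z Qh Rh Ph M \<longleftrightarrow>
     sym_mat Qh \<and> sym_mat Rh \<and> sym_mat Ph \<and>
     transpose Z + Z - transpose Ks ** Rh ** Ks + Qh = 0 \<and>
     transpose Z - transpose Ks ** Rh ** Ks = Ph ** M \<and>
     (\<forall>i < CARD('n). \<forall>t \<in> set ts. M *v nderiv i xs t = nderiv (Suc i) xs t) \<and>
     psd_ge Qh 0 \<and> psd_ge Rh \<epsilon> \<and> psd_ge Ph \<epsilon>"

end

theory Submission
  imports Defs
begin

lemma mpow_comm: "mpow A k ** A = A ** mpow A k"
  by (induction k) (simp_all add: matrix_mul_assoc[symmetric])

lemma mpow_Suc': "mpow A (Suc k) = mpow A k ** A"
  by (simp add: mpow_comm)

lemma mpow_scale: "mpow (t *\<^sub>R A) k = (t ^ k) *\<^sub>R mpow A k"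
  by (induction k) (simp_all add: matrix_scalar_ac scalar_matrix_assoc[symmetric])

lemma mpow_vec_bound:
  "norm (mpow A k *v y) \<le> onorm ((*v) A) ^ k * norm (y::real^'n)"
proof (induction k)
  case 0 then show ?case by simp
next
  case (Suc k)
  have "norm (mpow A (Suc k) *v y) = norm (A *v (mpow A k *v y))"
    by (simp add: matrix_vector_mul_assoc)
  also have "\<dots> \<le> onorm ((*v) A) * norm (mpow A k *v y)"
    by (rule onorm) simp
  also have "\<dots> \<le> onorm ((*v) A) * (onorm ((*v) A) ^ k * norm y)"
    by (rule mult_left_mono[OF Suc.IH]) (simp add: onorm_pos_le)
  finally show ?case by (simp add: mult_ac)
qed

lemma mat_norm_bound:
  fixes M :: "real^'n^'n"
  assumes "\<And>y. norm (M *v y) \<le> c * norm y"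
  shows "norm M \<le> real CARD('n) * real CARD('n) * c"
proof -
  have e: "\<bar>M $ i $ j\<bar> \<le> c" for i j
  proof -
    have "M $ i $ j = (M *v axis j 1) $ i"
      by (simp add: matrix_vector_mult_def axis_def if_distrib cong: if_cong)
    then have "\<bar>M $ i $ j\<bar> \<le> norm (M *v axis j 1)" by (simp add: component_le_norm_cart)
    also have "\<dots> \<le> c" using assms[of "axis j 1"] by simp
    finally show ?thesis .
  qed
  have "norm M \<le> (\<Sum>i\<in>UNIV. norm (M $ i))"
    unfolding norm_vec_def by (rule L2_set_le_sum) simp
  also have "\<dots> \<le> (\<Sum>i\<in>(UNIV::'n set). real CARD('n) * c)"
  proof (rule sum_mono)
    fix i
    have "norm (M $ i) \<le> (\<Sum>j\<in>UNIV. \<bar>M $ i $ j\<bar>)" by (rule norm_le_l1_cart)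
    also have "\<dots> \<le> (\<Sum>j\<in>(UNIV::'n set). c)" by (rule sum_mono) (rule e)
    finally show "norm (M $ i) \<le> real CARD('n) * c" by simp
  qed
  finally show ?thesis by simp
qed

lemma mpow_norm_bound:
  fixes A :: "real^'n^'n"
  shows "norm (mpow A k) \<le> real CARD('n) * real CARD('n) * onorm ((*v) A) ^ k"
  by (rule mat_norm_bound) (rule mpow_vec_bound)

lemma mexp_summable:
  fixes A :: "real^'n^'n"
  shows "summable (\<lambda>k. (1 / fact k) *\<^sub>R mpow A k)"
proof (rule summable_comparison_test)
  let ?C = "real CARD('n) * real CARD('n)" and ?L = "onorm ((*v) A)"
  show "\<exists>N. \<forall>n\<ge>N. norm ((1 / fact n) *\<^sub>R mpow A n) \<le> ?C * (inverse (fact n) * ?L ^ n)"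
  proof (intro exI allI impI)
    fix n :: nat
    have "norm ((1 / fact n) *\<^sub>R mpow A n) = inverse (fact n) * norm (mpow A n)"
      by (simp add: divide_inverse)
    also have "\<dots> \<le> inverse (fact n) * (?C * ?L ^ n)"
      by (rule mult_left_mono[OF mpow_norm_bound]) simp
    finally show "norm ((1 / fact n) *\<^sub>R mpow A n) \<le> ?C * (inverse (fact n) * ?L ^ n)"
      by (simp add: mult_ac)
  qed
  show "summable (\<lambda>n. ?C * (inverse (fact n) * ?L ^ n))"
    by (rule summable_mult) (rule summable_exp)
qed

lemma bounded_linear_mv: "bounded_linear (\<lambda>M::real^'n^'m. M *v y)"
proof (rule linear_conv_bounded_linear[THEN iffD1])
  show "linear (\<lambda>M::real^'n^'m. M *v y)"
    by (rule linearI) (simp_all add: matrix_vector_mult_add_rdistrib scaleR_matrix_vector_assoc)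
qed

lemma mexp_apply_sums:
  fixes A :: "real^'n^'n"
  shows "(\<lambda>k. (1 / fact k) *\<^sub>R (mpow A k *v y)) sums (mexp A *v y)"
proof -
  have "(\<lambda>k. (1 / fact k) *\<^sub>R mpow A k) sums mexp A"
    unfolding mexp_def by (rule summable_sums[OF mexp_summable])
  from bounded_linear.sums[OF bounded_linear_mv this, of y]
  show ?thesis by (simp add: scaleR_matrix_vector_assoc)
qed

lemma coef_summable:
  fixes A :: "real^'n^'n"
  shows "summable (\<lambda>k. ((mpow A k *v y) $ i / fact k) * x ^ k)"
proof (rule summable_comparison_test)
  let ?L = "onorm ((*v) A)"
  show "\<exists>N. \<forall>n\<ge>N. norm ((mpow A n *v y) $ i / fact n * x ^ n) \<le> norm y * (inverse (fact n) * (?L * \<bar>x\<bar>) ^ n)"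
  proof (intro exI allI impI)
    fix n :: nat
    have "\<bar>(mpow A n *v y) $ i\<bar> \<le> ?L ^ n * norm y"
      using component_le_norm_cart[of "mpow A n *v y" i] mpow_vec_bound[of A n y] by linarith
    then have "\<bar>(mpow A n *v y) $ i\<bar> * \<bar>x\<bar> ^ n \<le> ?L ^ n * norm y * \<bar>x\<bar> ^ n"
      by (rule mult_right_mono) simp
    then have "\<bar>(mpow A n *v y) $ i\<bar> * \<bar>x\<bar> ^ n / fact n \<le> ?L ^ n * norm y * \<bar>x\<bar> ^ n / fact n"
      by (rule divide_right_mono) simp
    moreover have "norm ((mpow A n *v y) $ i / fact n * x ^ n) = \<bar>(mpow A n *v y) $ i\<bar> * \<bar>x\<bar> ^ n / fact n"
      by (simp add: abs_mult power_abs)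
    moreover have "norm y * (inverse (fact n) * (?L * \<bar>x\<bar>) ^ n) = ?L ^ n * norm y * \<bar>x\<bar> ^ n / fact n"
      by (simp add: power_mult_distrib divide_inverse)
    ultimately show "norm ((mpow A n *v y) $ i / fact n * x ^ n) \<le> norm y * (inverse (fact n) * (?L * \<bar>x\<bar>) ^ n)"
      by simp
  qed
  show "summable (\<lambda>n. norm y * (inverse (fact n) * (?L * \<bar>x\<bar>) ^ n))"
    by (rule summable_mult) (rule summable_exp)
qed

lemma mexp_comp:
  fixes A :: "real^'n^'n"
  shows "(mexp (t *\<^sub>R A) *v y) $ i = (\<Sum>k. ((mpow A k *v y) $ i / fact k) * t ^ k)"
proof -
  have "(\<lambda>k. ((1 / fact k) *\<^sub>R (mpow (t *\<^sub>R A) k *v y)) $ i) sums ((mexp (t *\<^sub>R A) *v y) $ i)"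
    by (rule bounded_linear.sums[OF bounded_linear_vec_nth mexp_apply_sums])
  then have "(\<lambda>k. ((mpow A k *v y) $ i / fact k) * t ^ k) sums ((mexp (t *\<^sub>R A) *v y) $ i)"
    by (simp add: mpow_scale scaleR_matrix_vector_assoc[symmetric] mult.commute)
  then show ?thesis by (simp add: sums_iff)
qed

lemma diffs_coef:
  fixes A :: "real^'n^'n"
  shows "diffs (\<lambda>k. (mpow A k *v y) $ i / fact k) = (\<lambda>k. (mpow A k *v (A *v y)) $ i / fact k)"
proof
  fix n
  have "mpow A (Suc n) *v y = mpow A n *v (A *v y)"
    by (simp only: mpow_Suc' matrix_vector_mul_assoc)
  then show "diffs (\<lambda>k. (mpow A k *v y) $ i / fact k) n = (mpow A n *v (A *v y)) $ i / fact n"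
    unfolding diffs_def by (simp only: fact_Suc of_nat_mult) (simp del: mpow.simps of_nat_Suc)
qed

lemma mexp_deriv:
  fixes A :: "real^'n^'n"
  shows "((\<lambda>t. mexp (t *\<^sub>R A) *v y) has_vector_derivative (mexp (t *\<^sub>R A) *v (A *v y))) (at t within S)"
  unfolding has_vector_derivative_def
proof (subst has_derivative_componentwise_within, intro ballI)
  fix b :: "real^'n" assume "b \<in> Basis"
  then obtain i where b: "b = axis i 1" by (auto simp: Basis_vec_def)
  let ?c = "\<lambda>k. (mpow A k *v y) $ i / fact k"
  have "((\<lambda>x. \<Sum>n. ?c n * x ^ n) has_field_derivative (\<Sum>n. diffs ?c n * t ^ n)) (at t)"
    by (rule termdiffs_strong_converges_everywhere) (rule coef_summable)
  then have "((\<lambda>x. (mexp (x *\<^sub>R A) *v y) $ i) has_field_derivative ((mexp (t *\<^sub>R A) *v (A *v y)) $ i)) (at t within S)"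
    by (simp add: diffs_coef mexp_comp has_field_derivative_at_within)
  then show "((\<lambda>x. (mexp (x *\<^sub>R A) *v y) \<bullet> b) has_derivative (\<lambda>x. (x *\<^sub>R (mexp (t *\<^sub>R A) *v (A *v y))) \<bullet> b)) (at t within S)"
    by (simp add: b inner_axis has_field_derivative_def mult_commute_abs)
qed

lemma mexp_zero: "mexp (0 *\<^sub>R (A::real^'n^'n)) *v y = y"
proof -
  have "(mexp (0 *\<^sub>R A) *v y) $ i = y $ i" for i
  proof -
    have "(mexp (0 *\<^sub>R A) *v y) $ i = (\<Sum>k. ((mpow A k *v y) $ i / fact k) * 0 ^ k)"
      by (rule mexp_comp)
    also have "\<dots> = y $ i" by (subst powser_zero) simp
    finally show ?thesis .
  qed
  then show ?thesis by (simp add: vec_eq_iff)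
qed

lemma mexp_commute:
  fixes M :: "real^'n^'n"
  shows "M *v (mexp (t *\<^sub>R M) *v y) = mexp (t *\<^sub>R M) *v (M *v y)"
proof -
  have s1: "(\<lambda>k. M *v ((1 / fact k) *\<^sub>R (mpow (t *\<^sub>R M) k *v y))) sums (M *v (mexp (t *\<^sub>R M) *v y))"
    by (rule bounded_linear.sums[OF matrix_vector_mul_bounded_linear mexp_apply_sums])
  have "M *v ((1 / fact k) *\<^sub>R (mpow (t *\<^sub>R M) k *v y)) = (1 / fact k) *\<^sub>R (mpow (t *\<^sub>R M) k *v (M *v y))" for k
  proof -
    have "M *v (mpow M k *v y) = mpow M k *v (M *v y)"
      by (simp add: matrix_vector_mul_assoc mpow_comm)
    then show ?thesis
      by (simp add: mpow_scale scaleR_matrix_vector_assoc[symmetric] matrix_vector_mult_scaleR)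
  qed
  with s1 have "(\<lambda>k. (1 / fact k) *\<^sub>R (mpow (t *\<^sub>R M) k *v (M *v y))) sums (M *v (mexp (t *\<^sub>R M) *v y))"
    by simp
  moreover have "(\<lambda>k. (1 / fact k) *\<^sub>R (mpow (t *\<^sub>R M) k *v (M *v y))) sums (mexp (t *\<^sub>R M) *v (M *v y))"
    by (rule mexp_apply_sums)
  ultimately show ?thesis by (rule sums_unique2)
qed

lemma nderiv_mexp:
  fixes A :: "real^'n^'n"
  shows "nderiv i (\<lambda>t. mexp (t *\<^sub>R A) *v y) = (\<lambda>t. mexp (t *\<^sub>R A) *v (mpow A i *v y))"
proof (induction i)
  case 0 then show ?case by simp
next
  case (Suc i)
  show ?case
  proof
    fix t
    have "vector_derivative (\<lambda>t. mexp (t *\<^sub>R A) *v (mpow A i *v y)) (at t) = mexp (t *\<^sub>R A) *v (A *v (mpow A i *v y))"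
      by (rule vector_derivative_at) (rule mexp_deriv)
    then show "nderiv (Suc i) (\<lambda>t. mexp (t *\<^sub>R A) *v y) t = mexp (t *\<^sub>R A) *v (mpow A (Suc i) *v y)"
      by (simp add: Suc.IH matrix_vector_mul_assoc)
  qed
qed

lemma mexp_cont: "continuous_on S (\<lambda>t. mexp (t *\<^sub>R (A::real^'n^'n)) *v y)"
  by (rule continuous_on_vector_derivative) (rule mexp_deriv)


lemma krylov:
  fixes AK M :: "real^'n^'n"
  assumes h: "\<And>i. i < CARD('n) \<Longrightarrow> M *v (mpow AK i *v x) = mpow AK (Suc i) *v x"
  shows "mpow M k *v x = mpow AK k *v x"
proof -
  define v where "v i = mpow AK i *v x" for i
  define S where "S k = v ` {..<k}" for k
  have S_Suc: "S (Suc k) = insert (v k) (S k)" for k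
    by (simp add: S_def lessThan_Suc)
  have "\<exists>k \<le> CARD('n). v k \<in> span (S k)"
  proof (rule ccontr)
    assume "\<not> ?thesis"
    then have nin: "\<And>k. k \<le> CARD('n) \<Longrightarrow> v k \<notin> span (S k)" by auto
    have "k \<le> Suc (CARD('n)) \<Longrightarrow> dim (S k) = k" for k
    proof (induction k)
      case 0 then show ?case by (simp add: S_def)
    next
      case (Suc k)
      then show ?case using nin[of k] by (simp add: S_Suc dim_insert)
    qed
    then have "dim (S (Suc (CARD('n)))) = Suc (CARD('n))" by simp
    with dim_subset_UNIV_cart[of "S (Suc (CARD('n)))"] show False by simp
  qed
  then obtain k0 where k0: "k0 \<le> CARD('n)" "v k0 \<in> span (S k0)" by blast
  have sub: "span (S k0) \<subseteq> span (S k0)" by simp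
  have img: "(*v) AK ` S k0 \<subseteq> span (S k0)"
  proof
    fix z assume "z \<in> (*v) AK ` S k0"
    then obtain i where i: "i < k0" "z = AK *v v i" by (auto simp: S_def)
    then have z: "z = v (Suc i)" by (simp add: v_def matrix_vector_mul_assoc)
    show "z \<in> span (S k0)"
    proof (cases "Suc i = k0")
      case True then show ?thesis using z k0 by simp
    next
      case False then have "v (Suc i) \<in> S k0" using i by (auto simp: S_def)
      then show ?thesis using z by (simp add: span_base)
    qed
  qed
  have inv: "AK *v z \<in> span (S k0)" if "z \<in> span (S k0)" for z
  proof -
    have "AK *v z \<in> (*v) AK ` span (S k0)" using that by blast
    also have "\<dots> = span ((*v) AK ` S k0)" by (simp add: linear_span_image)
    also have "\<dots> \<subseteq> span (S k0)" by (rule span_minimal[OF img subspace_span])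
    finally show ?thesis .
  qed
  have eq: "M *v z = AK *v z" if "z \<in> span (S k0)" for z
  proof (rule linear_eq_on_span[of "(*v) M" "(*v) AK" "S k0"])
    show "linear ((*v) M)" "linear ((*v) AK)" by simp_all
    show "z \<in> span (S k0)" by fact
    fix b assume "b \<in> S k0"
    then obtain i where "i < k0" "b = v i" by (auto simp: S_def)
    then show "M *v b = AK *v b"
      using h[of i] k0 by (simp add: v_def matrix_vector_mul_assoc)
  qed
  have allin: "v j \<in> span (S k0)" for j
  proof (induction j)
    case 0 show ?case
    proof (cases "k0 = 0")
      case True then show ?thesis using k0 by simp
    next
      case False then show ?thesis by (auto simp: S_def intro!: span_base)
    qed
  next
    case (Suc j)
    have "v (Suc j) = AK *v v j" by (simp add: v_def matrix_vector_mul_assoc)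
    then show ?case using inv[OF Suc.IH] by simp
  qed
  show ?thesis
  proof (induction k)
    case 0 show ?case by simp
  next
    case (Suc k)
    have "mpow M (Suc k) *v x = M *v (mpow M k *v x)" by (simp add: matrix_vector_mul_assoc)
    also have "\<dots> = M *v v k" by (simp add: Suc.IH v_def)
    also have "\<dots> = AK *v v k" by (rule eq[OF allin])
    also have "\<dots> = mpow AK (Suc k) *v x" by (simp add: v_def matrix_vector_mul_assoc)
    finally show ?case .
  qed
qed


lemma mexp_eq_of_pow:
  fixes M N :: "real^'n^'n"
  assumes "\<And>k. mpow M k *v x = mpow N k *v x"
  shows "mexp (t *\<^sub>R M) *v x = mexp (t *\<^sub>R N) *v x"
proof -
  have "(\<lambda>k. (1 / fact k) *\<^sub>R (mpow (t *\<^sub>R M) k *v x)) sums (mexp (t *\<^sub>R N) *v x)"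
    using mexp_apply_sums[of "t *\<^sub>R N" x]
    by (simp add: mpow_scale scaleR_matrix_vector_assoc[symmetric] assms)
  then show ?thesis using mexp_apply_sums[of "t *\<^sub>R M" x] by (simp add: sums_iff)
qed

lemma minv_left: "invertible (S::real^'n^'n) \<Longrightarrow> matrix_inv S ** S = mat 1"
  unfolding invertible_def matrix_inv_def by (rule someI2_ex) auto

lemma minv_right: "invertible (S::real^'n^'n) \<Longrightarrow> S ** matrix_inv S = mat 1"
  unfolding invertible_def matrix_inv_def by (rule someI2_ex) auto

lemma left_inv_eq: "invertible (S::real^'n^'n) \<Longrightarrow> L ** S = mat 1 \<Longrightarrow> L = matrix_inv S"
  by (metis matrix_mul_assoc matrix_mul_lid matrix_mul_rid minv_right)

lemma mcancel_left: "invertible (S::real^'n^'n) \<Longrightarrow> S ** X = S ** Y \<Longrightarrow> X = Y"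
  by (metis matrix_mul_assoc matrix_mul_lid minv_left)

lemma transpose_add_x: "transpose (A + B) = transpose A + transpose (B::real^'n^'m)"
  by (simp add: transpose_def vec_eq_iff)

lemma transpose_diff_x: "transpose (A - B) = transpose A - transpose (B::real^'n^'m)"
  by (simp add: transpose_def vec_eq_iff)

lemma transpose_zero_x: "transpose (0::real^'n^'m) = 0"
  by (simp add: transpose_def vec_eq_iff)

lemma mdiff_ldistrib: "(A::real^'n^'m) ** (B - C) = A ** B - A ** (C::real^'k^'n)"
  by (simp add: matrix_matrix_mult_def vec_eq_iff algebra_simps sum_subtractf)

lemma mdiff_rdistrib: "((A::real^'n^'m) - B) ** (C::real^'k^'n) = A ** C - B ** C"
  by (simp add: matrix_matrix_mult_def vec_eq_iff algebra_simps sum_subtractf)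

lemma madd_rdistrib: "((A::real^'n^'m) + B) ** (C::real^'k^'n) = A ** C + B ** C"
  by (simp add: matrix_matrix_mult_def vec_eq_iff algebra_simps sum.distrib)

lemma transpose_inv_sym:
  assumes "sym_mat (S::real^'n^'n)" "invertible S"
  shows "transpose (matrix_inv S) = matrix_inv S"
proof (rule left_inv_eq[OF assms(2)])
  have "transpose (matrix_inv S) ** S = transpose (matrix_inv S) ** transpose S"
    using assms(1) by (simp add: sym_mat_def)
  also have "\<dots> = transpose (S ** matrix_inv S)" by (simp add: matrix_transpose_mul)
  also have "\<dots> = mat 1" by (simp add: minv_right[OF assms(2)])
  finally show "transpose (matrix_inv S) ** S = mat 1" .
qed

lemma psd_invertible:
  assumes "psd_ge (S::real^'n^'n) c" "c > 0"
  shows "invertible S"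
proof -
  have "\<forall>x. S *v x = 0 \<longrightarrow> x = 0"
  proof (intro allI impI)
    fix x assume "S *v x = 0"
    with assms(1) have "c * (x \<bullet> x) \<le> 0" by (auto simp: psd_ge_def dest: spec[of _ x])
    with assms(2) have "x \<bullet> x \<le> 0" by (simp add: mult_le_0_iff)
    then show "x = 0" by (metis antisym inner_ge_zero inner_eq_zero_iff)
  qed
  then obtain L where L: "L ** S = mat 1" using matrix_left_invertible_ker by blast
  then have "S ** L = mat 1" using matrix_left_right_inverse by blast
  with L show ?thesis unfolding invertible_def by blast
qed

lemma pd_lower:
  assumes "pd_mat (S::real^'n^'n)"
  shows "\<exists>l>0. psd_ge S l"
proof -
  let ?f = "\<lambda>x::real^'n. x \<bullet> (S *v x)"
  have cont: "continuous_on (sphere 0 1) ?f"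
    by (intro continuous_intros)
  have ne: "sphere (0::real^'n) 1 \<noteq> {}"
    using norm_axis_1[of "undefined::'n"] by (metis mem_sphere_0 empty_iff)
  obtain u where u: "u \<in> sphere 0 1" "\<forall>y\<in>sphere 0 1. ?f u \<le> ?f y"
    using continuous_attains_inf[OF compact_sphere ne cont] by blast
  have "u \<noteq> 0" using u(1) by auto
  then have lpos: "?f u > 0" using assms by (simp add: pd_mat_def)
  have "psd_ge S (?f u)"
    unfolding psd_ge_def
  proof
    fix x :: "real^'n"
    show "?f u * (x \<bullet> x) \<le> ?f x"
    proof (cases "x = 0")
      case True then show ?thesis by simp
    next
      case False
      let ?y = "(1 / norm x) *\<^sub>R x"
      have "?y \<in> sphere 0 1" using False by simp
      then have "?f u \<le> ?f ?y" using u(2) by blast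
      also have "?f ?y = ?f x / (norm x)^2"
        by (simp add: matrix_vector_mult_scaleR power2_eq_square field_simps)
      finally have "?f u * (norm x)^2 \<le> ?f x" using False by (simp add: field_simps)
      then show ?thesis by (simp add: dot_square_norm)
    qed
  qed
  with lpos show ?thesis by blast
qed


lemma traj_derivs_eq:
  fixes M N :: "real^'n^'n"
  assumes T: "T > 0" and eq: "\<And>t. t \<in> {0..T} \<Longrightarrow> mexp (t *\<^sub>R M) *v x = mexp (t *\<^sub>R N) *v x"
  shows "t \<in> {0..T} \<Longrightarrow> mexp (t *\<^sub>R M) *v (mpow M i *v x) = mexp (t *\<^sub>R N) *v (mpow N i *v x)"
proof (induction i arbitrary: t)
  case 0 then show ?case using eq by simp
next
  case (Suc i)
  have d1: "((\<lambda>s. mexp (s *\<^sub>R M) *v (mpow M i *v x)) has_vector_derivative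
      mexp (t *\<^sub>R M) *v (M *v (mpow M i *v x))) (at t within cbox 0 T)"
    by (rule mexp_deriv)
  have d2: "((\<lambda>s. mexp (s *\<^sub>R N) *v (mpow N i *v x)) has_vector_derivative
      mexp (t *\<^sub>R N) *v (N *v (mpow N i *v x))) (at t within cbox 0 T)"
    by (rule mexp_deriv)
  have d2': "((\<lambda>s. mexp (s *\<^sub>R M) *v (mpow M i *v x)) has_vector_derivative
      mexp (t *\<^sub>R N) *v (N *v (mpow N i *v x))) (at t within cbox 0 T)"
    by (rule has_vector_derivative_transform[OF _ _ d2]) (use Suc in auto)
  have "mexp (t *\<^sub>R M) *v (M *v (mpow M i *v x)) = mexp (t *\<^sub>R N) *v (N *v (mpow N i *v x))"
    by (rule vector_derivative_unique_within_closed_interval[OF T _ d1 d2']) (use Suc in auto)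
  then show ?case by (simp add: matrix_vector_mul_assoc)
qed

lemma J1_nonneg: "0 \<le> J1 Ks AKs x0 T Ah Bh Qh Rh Ph"
proof -
  let ?f = "\<lambda>t. (norm (traj Ah Bh (gain Bh Rh Ph) x0 t - mexp (t *\<^sub>R AKs) *v x0))\<^sup>2"
  have "0 \<le> integral {0..T} ?f"
  proof (cases "?f integrable_on {0..T}")
    case True then show ?thesis by (rule integral_nonneg) simp
  next
    case False then show ?thesis by (simp add: not_integrable_integral)
  qed
  then show ?thesis unfolding J1_def by simp
qed


lemma mexp_zero': "mexp 0 *v y = (y::real^'n)"
  using mexp_zero[of "0::real^'n^'n" y] by simp

lemma mnorm2_zero: "mnorm2 (0::real^'n^'m) = 0"
proof -
  have "((*v) (0::real^'n^'m)) = (\<lambda>x. 0)" by (rule ext) simp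
  then show ?thesis unfolding mnorm2_def by (simp add: onorm_zero)
qed

lemma part2:
  fixes K :: "real^'n^'m" and AK :: "real^'n^'n"
  assumes eps: "\<epsilon> > 0" and ts0: "0 \<in> set ts"
    and feas: "P2_feasible \<epsilon> K (\<lambda>t. mexp (t *\<^sub>R AK) *v x0) ts Z Qh Rh Ph M"
  shows "let Ah = matrix_inv Ph ** transpose Z;
            Bh = matrix_inv Ph ** transpose K ** Rh
        in P1_optimal \<epsilon> K AK x0 T Ah Bh Qh Rh Ph \<and>
           J1 K AK x0 T Ah Bh Qh Rh Ph = 0 \<and>
           gain Bh Rh Ph = K"
proof -
  define Ah where "Ah = matrix_inv Ph ** transpose Z"
  define Bh where "Bh = matrix_inv Ph ** transpose K ** Rh"
  note F = feas[unfolded P2_feasible_def]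
  have sQ: "sym_mat Qh" and sR: "sym_mat Rh" and sP: "sym_mat Ph"
    and e1: "transpose Z + Z - transpose K ** Rh ** K + Qh = 0"
    and e2: "transpose Z - transpose K ** Rh ** K = Ph ** M"
    and dr: "\<forall>i < CARD('n). \<forall>t \<in> set ts. M *v nderiv i (\<lambda>t. mexp (t *\<^sub>R AK) *v x0) t
               = nderiv (Suc i) (\<lambda>t. mexp (t *\<^sub>R AK) *v x0) t"
    and pQ: "psd_ge Qh 0" and pR: "psd_ge Rh \<epsilon>" and pP: "psd_ge Ph \<epsilon>"
    using F by auto
  have iR: "invertible Rh" by (rule psd_invertible[OF pR eps])
  have iP: "invertible Ph" by (rule psd_invertible[OF pP eps])
  have tR: "transpose Rh = Rh" using sR by (simp add: sym_mat_def)
  have tP: "transpose Ph = Ph" using sP by (simp add: sym_mat_def)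
  have tiP: "transpose (matrix_inv Ph) = matrix_inv Ph" by (rule transpose_inv_sym[OF sP iP])
  have lR: "matrix_inv Rh ** Rh = mat 1" by (rule minv_left[OF iR])
  have lP: "matrix_inv Ph ** Ph = mat 1" by (rule minv_left[OF iP])
  have rP: "Ph ** matrix_inv Ph = mat 1" by (rule minv_right[OF iP])
  have "gain Bh Rh Ph = (matrix_inv Rh ** Rh) ** K ** (matrix_inv Ph ** Ph)"
    unfolding gain_def Bh_def by (simp add: matrix_transpose_mul tR tiP matrix_mul_assoc)
  then have gK: "gain Bh Rh Ph = K" by (simp add: lR lP)
  have t1: "transpose Ah ** Ph = Z"
  proof -
    have "transpose Ah ** Ph = Z ** (matrix_inv Ph ** Ph)"
      unfolding Ah_def by (simp add: matrix_transpose_mul tiP matrix_mul_assoc)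
    then show ?thesis by (simp add: lP)
  qed
  have t2: "Ph ** Ah = transpose Z"
  proof -
    have "Ph ** Ah = (Ph ** matrix_inv Ph) ** transpose Z"
      unfolding Ah_def by (simp add: matrix_mul_assoc)
    then show ?thesis by (simp add: rP)
  qed
  have PB: "Ph ** Bh = transpose K ** Rh"
  proof -
    have "Ph ** Bh = (Ph ** matrix_inv Ph) ** transpose K ** Rh"
      unfolding Bh_def by (simp add: matrix_mul_assoc)
    then show ?thesis by (simp add: rP)
  qed
  have t3: "Ph ** Bh ** matrix_inv Rh ** transpose Bh ** Ph = transpose K ** Rh ** K"
  proof -
    have "Ph ** Bh ** matrix_inv Rh ** transpose Bh ** Ph = (Ph ** Bh) ** gain Bh Rh Ph"
      unfolding gain_def by (simp add: matrix_mul_assoc)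
    then show ?thesis by (simp add: PB gK)
  qed
  have ric: "riccati Ah Bh Qh Rh Ph = 0"
    unfolding riccati_def t1 t2 t3 using e1 by (simp add: algebra_simps)
  have feas1: "P1_feasible \<epsilon> Ah Bh Qh Rh Ph"
    unfolding P1_feasible_def using sQ sR sP ric pQ pR pP by simp
  have AM: "Ah - Bh ** K = M"
  proof (rule mcancel_left[OF iP])
    show "Ph ** (Ah - Bh ** K) = Ph ** M"
      by (simp add: mdiff_ldistrib matrix_mul_assoc PB t2 e2[symmetric])
  qed
  have h: "M *v (mpow AK i *v x0) = mpow AK (Suc i) *v x0" if "i < CARD('n)" for i
    using dr[rule_format, OF that ts0] by (simp add: nderiv_mexp mexp_zero')
  have traj_eq: "traj Ah Bh (gain Bh Rh Ph) x0 t = mexp (t *\<^sub>R AK) *v x0" for t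
    unfolding traj_def gK AM by (rule mexp_eq_of_pow) (rule krylov[OF h])
  have J0: "J1 K AK x0 T Ah Bh Qh Rh Ph = 0"
    unfolding J1_def gK by (simp add: traj_eq[unfolded gK] mnorm2_zero)
  have opt: "P1_optimal \<epsilon> K AK x0 T Ah Bh Qh Rh Ph"
    unfolding P1_optimal_def using feas1 J0 by (simp add: J1_nonneg)
  show ?thesis unfolding Let_def Ah_def[symmetric] Bh_def[symmetric] using opt J0 gK by simp
qed


lemma part1:
  fixes K :: "real^'n^'m" and AK :: "real^'n^'n"
  assumes eps: "\<epsilon> > 0" and T: "T > 0"
    and ts_range: "\<forall>t \<in> set ts. 0 \<le> t \<and> t \<le> T"
    and comp: "\<exists>A' B' Q' R' P'. P1_feasible \<epsilon> A' B' Q' R' P' \<and> J1 K AK x0 T A' B' Q' R' P' = 0"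
    and opt: "P1_optimal \<epsilon> K AK x0 T Ah Bh Qh Rh Ph"
  shows "P2_feasible \<epsilon> K (\<lambda>t. mexp (t *\<^sub>R AK) *v x0) ts (transpose Ah ** Ph) Qh Rh Ph (Ah - Bh ** K)"
proof -
  have feas: "P1_feasible \<epsilon> Ah Bh Qh Rh Ph" using opt by (simp add: P1_optimal_def)
  have Jle: "J1 K AK x0 T Ah Bh Qh Rh Ph \<le> 0"
    using opt comp unfolding P1_optimal_def by force
  define G where "G = gain Bh Rh Ph"
  define f where "f t = (norm (mexp (t *\<^sub>R (Ah - Bh ** G)) *v x0 - mexp (t *\<^sub>R AK) *v x0))\<^sup>2" for t
  have Jdef: "J1 K AK x0 T Ah Bh Qh Rh Ph = (mnorm2 (G - K))\<^sup>2 + integral {0..T} f"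
    unfolding J1_def traj_def G_def f_def by simp
  have cont: "continuous_on {0..T} f"
    unfolding f_def by (intro continuous_intros mexp_cont)
  have intg: "f integrable_on {0..T}"
    using cont by (rule integrable_continuous_interval)
  have I0: "0 \<le> integral {0..T} f"
    by (rule integral_nonneg[OF intg]) (simp add: f_def)
  have "(mnorm2 (G - K))\<^sup>2 = 0" and Iz: "integral {0..T} f = 0"
    using Jle Jdef I0 by (smt (verit) zero_le_power2)+
  then have "onorm (\<lambda>x. (G - K) *v x) = 0" by (simp add: mnorm2_def)
  then have "\<forall>x. (G - K) *v x = 0"
    using onorm_eq_0[OF matrix_vector_mul_bounded_linear[of "G - K"]] by simp
  then have "G - K = 0" by (simp add: matrix_eq)
  then have GK: "G = K" by simp
  have feq: "f t = 0" if "t \<in> {0..T}" for t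
  proof (rule has_integral_0_cbox_imp_0[of 0 T f])
    show "continuous_on (cbox 0 T) f" using cont by simp
    show "0 \<le> f x" for x by (simp add: f_def)
    show "(f has_integral 0) (cbox 0 T)" using intg Iz by (metis box_real(2) has_integral_integral)
    show "box 0 T \<noteq> {}" using T by simp
    show "t \<in> cbox 0 T" using that by simp
  qed
  define Mh where "Mh = Ah - Bh ** K"
  have teq: "mexp (t *\<^sub>R Mh) *v x0 = mexp (t *\<^sub>R AK) *v x0" if "t \<in> {0..T}" for t
    using feq[OF that] unfolding f_def GK Mh_def by simp
  have deq: "mexp (t *\<^sub>R Mh) *v (mpow Mh i *v x0) = mexp (t *\<^sub>R AK) *v (mpow AK i *v x0)"
    if "t \<in> {0..T}" for t i
    by (rule traj_derivs_eq[OF T teq that])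
  have dr: "Mh *v nderiv i (\<lambda>t. mexp (t *\<^sub>R AK) *v x0) t = nderiv (Suc i) (\<lambda>t. mexp (t *\<^sub>R AK) *v x0) t"
    if "t \<in> set ts" for t i
  proof -
    have tT: "t \<in> {0..T}" using ts_range that by auto
    have "Mh *v nderiv i (\<lambda>t. mexp (t *\<^sub>R AK) *v x0) t = Mh *v (mexp (t *\<^sub>R Mh) *v (mpow Mh i *v x0))"
      by (simp add: nderiv_mexp deq[OF tT])
    also have "\<dots> = mexp (t *\<^sub>R Mh) *v (Mh *v (mpow Mh i *v x0))"
      by (rule mexp_commute)
    also have "\<dots> = mexp (t *\<^sub>R Mh) *v (mpow Mh (Suc i) *v x0)"
      by (simp only: mpow.simps matrix_vector_mul_assoc)
    also have "\<dots> = nderiv (Suc i) (\<lambda>t. mexp (t *\<^sub>R AK) *v x0) t"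
      by (simp only: deq[OF tT] nderiv_mexp)
    finally show ?thesis .
  qed
  note F = feas[unfolded P1_feasible_def]
  have sQ: "sym_mat Qh" and sR: "sym_mat Rh" and sP: "sym_mat Ph"
    and ric: "riccati Ah Bh Qh Rh Ph = 0"
    and pQ: "psd_ge Qh 0" and pR: "psd_ge Rh \<epsilon>" and pP: "psd_ge Ph \<epsilon>"
    using F by auto
  have iR: "invertible Rh" by (rule psd_invertible[OF pR eps])
  have tR: "transpose Rh = Rh" using sR by (simp add: sym_mat_def)
  have tP: "transpose Ph = Ph" using sP by (simp add: sym_mat_def)
  have tiR: "transpose (matrix_inv Rh) = matrix_inv Rh" by (rule transpose_inv_sym[OF sR iR])
  have lR: "matrix_inv Rh ** Rh = mat 1" by (rule minv_left[OF iR])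
  have Kdef: "K = matrix_inv Rh ** transpose Bh ** Ph" using GK by (simp add: G_def gain_def)
  have tK: "transpose K = Ph ** Bh ** matrix_inv Rh"
    unfolding Kdef by (simp add: matrix_transpose_mul tP tiR matrix_mul_assoc)
  have KR: "transpose K ** Rh = Ph ** Bh"
  proof -
    have "transpose K ** Rh = Ph ** Bh ** (matrix_inv Rh ** Rh)"
      by (simp add: tK matrix_mul_assoc)
    then show ?thesis by (simp add: lR)
  qed
  have KRK: "transpose K ** Rh ** K = Ph ** Bh ** K" by (simp add: KR)
  have PBK: "Ph ** Bh ** K = Ph ** Bh ** matrix_inv Rh ** transpose Bh ** Ph"
    by (subst Kdef) (simp add: matrix_mul_assoc)
  have tZ: "transpose (transpose Ah ** Ph) = Ph ** Ah"
    by (simp add: matrix_transpose_mul tP)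
  have e1: "transpose (transpose Ah ** Ph) + transpose Ah ** Ph - transpose K ** Rh ** K + Qh = 0"
    using ric unfolding riccati_def tZ KRK PBK by (simp add: algebra_simps)
  have e2: "transpose (transpose Ah ** Ph) - transpose K ** Rh ** K = Ph ** (Ah - Bh ** K)"
    unfolding tZ KRK by (simp add: mdiff_ldistrib matrix_mul_assoc)
  show ?thesis
    unfolding P2_feasible_def using sQ sR sP e1 e2 pQ pR pP dr by (simp add: Mh_def)
qed


lemma competitor:
  fixes A :: "real^'n^'n" and B :: "real^'m^'n"
  assumes Q_sym: "sym_mat Q" and Q_psd: "psd_ge Q 0"
    and R_sym: "sym_mat R" and R_pd: "pd_mat R"
    and P_sym: "sym_mat P" and P_pd: "pd_mat P"
    and P_are: "riccati A B Q R P = 0" and eps: "\<epsilon> > 0"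
  shows "\<exists>A' B' Q' R' P'. P1_feasible \<epsilon> A' B' Q' R' P' \<and>
           J1 (gain B R P) (A - B ** gain B R P) x0 T A' B' Q' R' P' = 0"
proof -
  obtain lP where lP: "lP > 0" "psd_ge P lP" using pd_lower[OF P_pd] by blast
  obtain lR where lR: "lR > 0" "psd_ge R lR" using pd_lower[OF R_pd] by blast
  define c where "c = max (\<epsilon> / lP) (\<epsilon> / lR)"
  have c: "c > 0" using eps lP by (simp add: c_def less_max_iff_disj)
  have cP: "c * lP \<ge> \<epsilon>"
  proof -
    have "\<epsilon> / lP \<le> c" by (simp add: c_def)
    then have "\<epsilon> / lP * lP \<le> c * lP" using lP by (intro mult_right_mono) auto
    then show ?thesis using lP by simp
  qed
  have cR: "c * lR \<ge> \<epsilon>"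
  proof -
    have "\<epsilon> / lR \<le> c" by (simp add: c_def)
    then have "\<epsilon> / lR * lR \<le> c * lR" using lR by (intro mult_right_mono) auto
    then show ?thesis using lR by simp
  qed
  have iR: "invertible R" by (rule psd_invertible[OF lR(2) lR(1)])
  have inv_c: "matrix_inv (c *\<^sub>R R) = (1 / c) *\<^sub>R matrix_inv R"
  proof (rule left_inv_eq[symmetric])
    show "invertible (c *\<^sub>R R)" using c iR by (simp add: scalar_invertible)
    show "(1 / c) *\<^sub>R matrix_inv R ** (c *\<^sub>R R) = mat 1"
      using c by (simp add: matrix_scalar_ac scalar_matrix_assoc[symmetric] minv_left[OF iR])
  qed
  have psd_scale: "psd_ge (c *\<^sub>R S) e" if "psd_ge S l" "c * l \<ge> e" for S :: "real^'k^'k" and l e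
    unfolding psd_ge_def
  proof
    fix x :: "real^'k"
    have "e * (x \<bullet> x) \<le> (c * l) * (x \<bullet> x)" using that(2) by (rule mult_right_mono) simp
    also have "\<dots> = c * (l * (x \<bullet> x))" by simp
    also have "\<dots> \<le> c * (x \<bullet> (S *v x))"
      using that(1) c by (intro mult_left_mono) (auto simp: psd_ge_def)
    also have "\<dots> = x \<bullet> ((c *\<^sub>R S) *v x)"
      by (simp add: scaleR_matrix_vector_assoc[symmetric])
    finally show "e * (x \<bullet> x) \<le> x \<bullet> ((c *\<^sub>R S) *v x)" .
  qed
  have g: "gain B (c *\<^sub>R R) (c *\<^sub>R P) = gain B R P"
    using c by (simp add: gain_def inv_c matrix_scalar_ac scalar_matrix_assoc[symmetric])
  have r: "riccati A B (c *\<^sub>R Q) (c *\<^sub>R R) (c *\<^sub>R P) = c *\<^sub>R riccati A B Q R P"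
    using c by (simp add: riccati_def inv_c matrix_scalar_ac scalar_matrix_assoc[symmetric]
        scaleR_add_right scaleR_diff_right)
  have feas: "P1_feasible \<epsilon> A B (c *\<^sub>R Q) (c *\<^sub>R R) (c *\<^sub>R P)"
    unfolding P1_feasible_def
    using Q_sym R_sym P_sym P_are c
    by (simp add: sym_mat_def transpose_scalar r psd_scale[OF Q_psd] psd_scale[OF lR(2) cR]
        psd_scale[OF lP(2) cP])
  have J: "J1 (gain B R P) (A - B ** gain B R P) x0 T A B (c *\<^sub>R Q) (c *\<^sub>R R) (c *\<^sub>R P) = 0"
    unfolding J1_def traj_def g by (simp add: mnorm2_zero)
  show ?thesis using feas J by blast
qed

theorem theorem1:
  fixes A :: "real^'n^'n" and B :: "real^'m^'n"
    and Q :: "real^'n^'n" and R :: "real^'m^'m" and P :: "real^'n^'n"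
    and x0 :: "real^'n" and T \<epsilon> :: real and ts :: "real list"
  assumes stab: "stabilizable A B"
    and Q_sym: "sym_mat Q" and Q_psd: "psd_ge Q 0"
    and R_sym: "sym_mat R" and R_pd: "pd_mat R"
    and detect: "\<exists>S. sym_mat S \<and> psd_ge S 0 \<and> S ** S = Q \<and> detectable A S"
    and P_sym: "sym_mat P" and P_pd: "pd_mat P"
    and P_are: "riccati A B Q R P = 0"
    and P_stab: "hurwitz (A - B ** gain B R P)"
    and T_pos: "T > 0" and eps_pos: "\<epsilon> > 0"
    and ts_range: "\<forall>t \<in> set ts. 0 \<le> t \<and> t \<le> T"
    and ts_zero: "0 \<in> set ts"
  shows
   "(\<forall>Ah Bh Qh Rh Ph.
       P1_optimal \<epsilon> (gain B R P) (A - B ** gain B R P) x0 T Ah Bh Qh Rh Ph \<longrightarrow>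
       P2_feasible \<epsilon> (gain B R P) (\<lambda>t. mexp (t *\<^sub>R (A - B ** gain B R P)) *v x0) ts
         (transpose Ah ** Ph) Qh Rh Ph (Ah - Bh ** gain B R P))
    \<and>
    (\<forall>Z Qh Rh Ph M.
       P2_feasible \<epsilon> (gain B R P) (\<lambda>t. mexp (t *\<^sub>R (A - B ** gain B R P)) *v x0) ts
         Z Qh Rh Ph M \<longrightarrow>
       (let Ah = matrix_inv Ph ** transpose Z;
            Bh = matrix_inv Ph ** transpose (gain B R P) ** Rh
        in P1_optimal \<epsilon> (gain B R P) (A - B ** gain B R P) x0 T Ah Bh Qh Rh Ph \<and>
           J1 (gain B R P) (A - B ** gain B R P) x0 T Ah Bh Qh Rh Ph = 0 \<and>
           gain Bh Rh Ph = gain B R P))"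
proof (intro conjI allI impI)
  fix Ah Bh Qh Rh Ph
  assume "P1_optimal \<epsilon> (gain B R P) (A - B ** gain B R P) x0 T Ah Bh Qh Rh Ph"
  then show "P2_feasible \<epsilon> (gain B R P) (\<lambda>t. mexp (t *\<^sub>R (A - B ** gain B R P)) *v x0) ts
         (transpose Ah ** Ph) Qh Rh Ph (Ah - Bh ** gain B R P)"
    by (rule part1[OF eps_pos T_pos ts_range
          competitor[OF Q_sym Q_psd R_sym R_pd P_sym P_pd P_are eps_pos]])
next
  fix Z Qh Rh Ph M
  assume "P2_feasible \<epsilon> (gain B R P) (\<lambda>t. mexp (t *\<^sub>R (A - B ** gain B R P)) *v x0) ts
         Z Qh Rh Ph M"
  then show "let Ah = matrix_inv Ph ** transpose Z;
            Bh = matrix_inv Ph ** transpose (gain B R P) ** Rh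
        in P1_optimal \<epsilon> (gain B R P) (A - B ** gain B R P) x0 T Ah Bh Qh Rh Ph \<and>
           J1 (gain B R P) (A - B ** gain B R P) x0 T Ah Bh Qh Rh Ph = 0 \<and>
           gain Bh Rh Ph = gain B R P"
    by (rule part2[OF eps_pos ts_zero])
qed

end
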